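(* Consider an $M\times M$ input-queued switch, $\alpha>0$, $\lambda\in\Lambda$, and $q\in\mathcal I(\alpha)$. For every $(i,j)$ with $\lambda_{ij}>0$ there exists a permutation matrix $\pi$ with $\pi\cdot q^\alpha=\max_{\sigma\in\mathcal S}\sigma\cdot q^\alpha$ and $\pi_{ij}=1$ (powers taken componentwise).
   Context: Input-queued switch: queues indexed by $(i,j)$, $1\le i,j\le M$; schedule set $\mathcal S$ = all $M\times M$ permutation matrices; $x\cdot y=\sum_{ij}x_{ij}y_{ij}$. $\langle\mathcal S\rangle$ convex hull; $\Lambda=\{\lambda\in\mathbb R_+^{M\times M}:\lambda\le\sigma$ componentwise for some $\sigma\in\langle\mathcal S\rangle\}$. $E$ = extreme points of $\{\xi\ge0:\max_\pi\xi\cdot\pi\le1\}$, $\mathcal S^*$ its maximal elements, $\Xi(\lambda)=\{\xi\in\mathcal S^*:\xi\cdot\lambda=1\}$. $L_\alpha(q)=\sum_{ij}q_{ij}^{1+\alpha}/(1+\alpha)$; $\Delta_\alpha(q)$ is the unique minimizer of $L_\alpha(r)$ over $r\ge0$ subject to $\xi\cdot r\ge\xi\cdot q$ for all $\xi\in\Xi(\lambda)$ and $r_{ij}\le q_{ij}$ whenever $\lambda_{ij}=0$; $\mathcal I(\alpha)=\{q\ge0:\Delta_\alpha(q)=q\}$ (invariant states of MW-$\alpha$). *)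

theory Defs
  imports "HOL-Analysis.Analysis"
begin

text \<open>An M x M switch: the index set {1..M} is modelled by a finite type 'n
  (M = CARD('n)); queue / rate / schedule vectors are real matrices real^'n^'n,
  entry (i,j) being  x $ i $ j.\<close>

type_synonym 'n mat = "real^'n^'n"

definition dotm :: "('n::finite) mat \<Rightarrow> 'n mat \<Rightarrow> real" where
  "dotm x y = (\<Sum>i\<in>UNIV. \<Sum>j\<in>UNIV. x $ i $ j * y $ i $ j)"

definition nonneg :: "('n::finite) mat \<Rightarrow> bool" where
  "nonneg x \<longleftrightarrow> (\<forall>i j. 0 \<le> x $ i $ j)"

definition cle :: "('n::finite) mat \<Rightarrow> 'n mat \<Rightarrow> bool" where
  "cle x y \<longleftrightarrow> (\<forall>i j. x $ i $ j \<le> y $ i $ j)"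

definition perm_mat :: "(('n::finite) \<Rightarrow> 'n) \<Rightarrow> 'n mat" where
  "perm_mat p = (\<chi> i j. if p i = j then 1 else 0)"

definition Sched :: "('n::finite) mat set" where
  "Sched = {perm_mat p | p. bij p}"

definition CapReg :: "('n::finite) mat set" where
  "CapReg = {lam. nonneg lam \<and> (\<exists>\<sigma>\<in>convex hull Sched. cle lam \<sigma>)}"

definition DualPoly :: "('n::finite) mat set" where
  "DualPoly = {\<xi>. nonneg \<xi> \<and> Max ((\<lambda>\<pi>. dotm \<xi> \<pi>) ` Sched) \<le> 1}"

definition ExtE :: "('n::finite) mat set" where
  "ExtE = {\<xi>. \<xi> extreme_point_of DualPoly}"

definition SStar :: "('n::finite) mat set" where
  "SStar = {\<xi>\<in>ExtE. \<not> (\<exists>\<eta>\<in>ExtE. cle \<xi> \<eta> \<and> \<eta> \<noteq> \<xi>)}"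

definition Xi :: "('n::finite) mat \<Rightarrow> 'n mat set" where
  "Xi lam = {\<xi>\<in>SStar. dotm \<xi> lam = 1}"

definition L_alpha :: "real \<Rightarrow> ('n::finite) mat \<Rightarrow> real" where
  "L_alpha \<alpha> q = (\<Sum>i\<in>UNIV. \<Sum>j\<in>UNIV. (q $ i $ j) powr (1 + \<alpha>) / (1 + \<alpha>))"

definition Feas :: "('n::finite) mat \<Rightarrow> 'n mat \<Rightarrow> 'n mat set" where
  "Feas lam q = {r. nonneg r \<and> (\<forall>\<xi>\<in>Xi lam. dotm \<xi> r \<ge> dotm \<xi> q)
                 \<and> (\<forall>i j. lam $ i $ j = 0 \<longrightarrow> r $ i $ j \<le> q $ i $ j)}"

definition Delta :: "real \<Rightarrow> ('n::finite) mat \<Rightarrow> 'n mat \<Rightarrow> 'n mat" where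
  "Delta \<alpha> lam q = (THE r. r \<in> Feas lam q \<and> (\<forall>r'\<in>Feas lam q. L_alpha \<alpha> r \<le> L_alpha \<alpha> r'))"

definition Inv :: "real \<Rightarrow> ('n::finite) mat \<Rightarrow> 'n mat set" where
  "Inv \<alpha> lam = {q. nonneg q \<and> Delta \<alpha> lam q = q}"

definition cpow :: "('n::finite) mat \<Rightarrow> real \<Rightarrow> 'n mat" where
  "cpow q \<alpha> = (\<chi> i j. (q $ i $ j) powr \<alpha>)"

end

theory Submission imports Defs begin

lemma tangent_ineq:
  fixes x y \<alpha> :: real
  assumes "\<alpha> > 0" "x \<ge> 0" "y \<ge> 0"
  shows "y powr \<alpha> * (x - y) \<le> x powr (1+\<alpha>)/(1+\<alpha>) - y powr (1+\<alpha>)/(1+\<alpha>)"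
proof -
  have Y: "x * y powr \<alpha> \<le> x powr (1+\<alpha>)/(1+\<alpha>) + (y powr \<alpha>) powr ((1+\<alpha>)/\<alpha>) / ((1+\<alpha>)/\<alpha>)"
    using assms by (intro Youngs_inequality) (auto simp: field_simps)
  have e1: "(y powr \<alpha>) powr ((1+\<alpha>)/\<alpha>) = y powr (1+\<alpha>)"
    using assms by (simp add: powr_powr)
  have e2: "y powr (1+\<alpha>) = y * y powr \<alpha>"
    using assms by (simp add: powr_add)
  have e3: "y powr (1+\<alpha>) / ((1+\<alpha>)/\<alpha>) = y powr (1+\<alpha>) - y powr (1+\<alpha>)/(1+\<alpha>)"
    using assms by (simp add: field_simps)
  show ?thesis using Y unfolding e1 e3 using e2 by (simp add: algebra_simps)
qed

lemma strict_mid_aux: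
  fixes a b p :: real
  assumes "p > 1" "0 \<le> a" "a < b"
  shows "2 * ((a+b)/2) powr p < a powr p + b powr p"
proof -
  define m where "m = (a+b)/2"
  have am: "a < m" and mb: "m < b" using assms by (auto simp: m_def)
  have der: "\<And>z. z > 0 \<Longrightarrow> ((\<lambda>z. z powr p) has_real_derivative p * z powr (p-1)) (at z)"
    by (rule has_real_derivative_powr)
  have cont: "\<And>u v. 0 \<le> u \<Longrightarrow> continuous_on {u..v} (\<lambda>z. z powr p)"
    using assms by (intro continuous_on_powr') (auto intro!: continuous_intros)
  have dif: "\<And>u v z. 0 \<le> u \<Longrightarrow> u < z \<Longrightarrow> z < v \<Longrightarrow> (\<lambda>z. z powr p) differentiable (at z)"
    using der real_differentiable_def by (metis less_le_trans order_less_le)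
  have c1: "continuous_on {m..b} (\<lambda>z. z powr p)" using cont am assms by auto
  have d1: "\<And>z. m < z \<Longrightarrow> z < b \<Longrightarrow> (\<lambda>z. z powr p) differentiable (at z)"
    using dif am assms by (meson less_le_trans order_less_le)
  have c2: "continuous_on {a..m} (\<lambda>z. z powr p)" using cont am assms by auto
  have d2: "\<And>z. a < z \<Longrightarrow> z < m \<Longrightarrow> (\<lambda>z. z powr p) differentiable (at z)"
    using dif am assms by blast
  obtain l1 z1 where z1: "m < z1" "z1 < b" "DERIV (\<lambda>z. z powr p) z1 :> l1"
    "b powr p - m powr p = (b - m) * l1"
    using MVT[OF mb c1 d1] by blast
  obtain l2 z2 where z2: "a < z2" "z2 < m" "DERIV (\<lambda>z. z powr p) z2 :> l2"
    "m powr p - a powr p = (m - a) * l2"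
    using MVT[OF am c2 d2] by blast
  have "l1 = p * z1 powr (p-1)" using DERIV_unique[OF z1(3) der] z1 am assms by auto
  moreover have "l2 = p * z2 powr (p-1)" using DERIV_unique[OF z2(3) der] z2 assms by auto
  moreover have "z2 powr (p-1) < z1 powr (p-1)"
    using z1 z2 assms by (intro powr_less_mono2) auto
  ultimately have "l2 < l1" using assms by auto
  moreover have "b - m = m - a" "b - m > 0" using mb by (auto simp: m_def field_simps)
  ultimately have "m powr p - a powr p < b powr p - m powr p"
    using z1(4) z2(4) by simp
  thus ?thesis by (simp add: m_def)
qed

lemma strict_mid:
  fixes a b \<alpha> :: real
  assumes "\<alpha> > 0" "0 \<le> a" "0 \<le> b" "a \<noteq> b"
  shows "((a+b)/2) powr (1+\<alpha>)/(1+\<alpha>) < (a powr (1+\<alpha>)/(1+\<alpha>) + b powr (1+\<alpha>)/(1+\<alpha>))/2"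
proof -
  have "2 * ((a+b)/2) powr (1+\<alpha>) < a powr (1+\<alpha>) + b powr (1+\<alpha>)"
  proof (cases "a < b")
    case True thus ?thesis using strict_mid_aux[of "1+\<alpha>" a b] assms by auto
  next
    case False thus ?thesis using strict_mid_aux[of "1+\<alpha>" b a] assms by (auto simp: add.commute)
  qed
  hence "((a+b)/2) powr (1+\<alpha>) < (a powr (1+\<alpha>) + b powr (1+\<alpha>))/2" by simp
  hence "((a+b)/2) powr (1+\<alpha>)/(1+\<alpha>) < ((a powr (1+\<alpha>) + b powr (1+\<alpha>))/2)/(1+\<alpha>)"
    using assms by (intro divide_strict_right_mono) auto
  thus ?thesis by (simp add: add_divide_distrib mult.commute)
qed


lemma closed_imp_const: "closed {x. Q x} \<Longrightarrow> closed {x. P \<longrightarrow> Q x}"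
  by (cases P) auto

lemma cont_entry: "continuous_on S (\<lambda>r::('n::finite) mat. r $ k $ l)"
  by (intro continuous_intros)

lemma cont_dotm: "continuous_on S (\<lambda>r::('n::finite) mat. dotm \<xi> r)"
  unfolding dotm_def by (intro continuous_intros)

lemma closed_Feas: "closed (Feas lam q)"
proof -
  have "Feas lam q = {r. \<forall>k l. 0 \<le> r $ k $ l} \<inter> {r. \<forall>\<xi>. \<xi> \<in> Xi lam \<longrightarrow> dotm \<xi> q \<le> dotm \<xi> r}
     \<inter> {r. \<forall>k l. lam $ k $ l = 0 \<longrightarrow> r $ k $ l \<le> q $ k $ l}"
    unfolding Feas_def nonneg_def by auto
  moreover have "closed {r::'a mat. \<forall>k l. 0 \<le> r $ k $ l}"
    by (intro closed_Collect_all closed_Collect_le continuous_intros)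
  moreover have "closed {r. \<forall>\<xi>. \<xi> \<in> Xi lam \<longrightarrow> dotm \<xi> q \<le> dotm \<xi> r}"
    by (intro closed_Collect_all closed_imp_const closed_Collect_le cont_dotm continuous_intros)
  moreover have "closed {r::'a mat. \<forall>k l. lam $ k $ l = 0 \<longrightarrow> r $ k $ l \<le> q $ k $ l}"
    by (intro closed_Collect_all closed_imp_const closed_Collect_le continuous_intros)
  ultimately show ?thesis by auto
qed


lemma L_term_le:
  assumes "\<alpha> > 0" "nonneg r"
  shows "r $ k $ l powr (1+\<alpha>)/(1+\<alpha>) \<le> L_alpha \<alpha> r"
proof -
  have nn: "\<And>k l. 0 \<le> r $ k $ l powr (1+\<alpha>)/(1+\<alpha>)" using assms by auto
  have "r $ k $ l powr (1+\<alpha>)/(1+\<alpha>) \<le> (\<Sum>l'\<in>UNIV. r $ k $ l' powr (1+\<alpha>)/(1+\<alpha>))"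
    by (rule member_le_sum) (auto simp: nn)
  also have "\<dots> \<le> L_alpha \<alpha> r" unfolding L_alpha_def
    by (rule member_le_sum[where f="\<lambda>k. (\<Sum>l'\<in>UNIV. r $ k $ l' powr (1+\<alpha>)/(1+\<alpha>))"])
       (auto intro: sum_nonneg simp: nn)
  finally show ?thesis .
qed

lemma L_bound:
  assumes "\<alpha> > 0" "nonneg r" "L_alpha \<alpha> r \<le> c"
  shows "r $ k $ l \<le> max 1 ((1+\<alpha>)*c)"
proof (rule ccontr)
  assume "\<not> ?thesis"
  hence g: "r $ k $ l > 1" "r $ k $ l > (1+\<alpha>)*c" by auto
  have "r $ k $ l = r $ k $ l powr 1" using g by simp
  also have "\<dots> \<le> r $ k $ l powr (1+\<alpha>)" using g assms by (intro powr_mono) auto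
  finally have "(1+\<alpha>)*c < r $ k $ l powr (1+\<alpha>)" using g by linarith
  hence "c < r $ k $ l powr (1+\<alpha>)/(1+\<alpha>)" using assms by (simp add: field_simps)
  with L_term_le[OF assms(1,2), of k l] assms(3) show False by linarith
qed

definition midm :: "('n::finite) mat \<Rightarrow> 'n mat \<Rightarrow> 'n mat" where
  "midm a b = (\<chi> k l. (a $ k $ l + b $ k $ l)/2)"

lemma dotm_midm: "dotm \<xi> (midm a b) = (dotm \<xi> a + dotm \<xi> b)/2"
  unfolding dotm_def midm_def
  by (simp add: sum.distrib sum_divide_distrib[symmetric] distrib_left add_divide_distrib)

lemma Feas_midm:
  assumes "a \<in> Feas lam q" "b \<in> Feas lam q"
  shows "midm a b \<in> Feas lam q"
proof -
  have "\<forall>\<xi>\<in>Xi lam. dotm \<xi> (midm a b) \<ge> dotm \<xi> q"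
    using assms unfolding Feas_def by (auto simp: dotm_midm) (smt (verit))
  moreover have "nonneg (midm a b)" "\<forall>k l. lam $ k $ l = 0 \<longrightarrow> midm a b $ k $ l \<le> q $ k $ l"
    using assms unfolding Feas_def nonneg_def midm_def by force+
  ultimately show ?thesis unfolding Feas_def by blast
qed

lemma L_midm:
  assumes "\<alpha> > 0" "nonneg a" "nonneg b" "a \<noteq> b"
  shows "L_alpha \<alpha> (midm a b) < (L_alpha \<alpha> a + L_alpha \<alpha> b)/2"
proof -
  obtain k0 l0 where kl: "a $ k0 $ l0 \<noteq> b $ k0 $ l0" using assms(4) by (metis vec_eq_iff)
  have le: "\<And>k l. ((a$k$l + b$k$l)/2) powr (1+\<alpha>)/(1+\<alpha>) \<le>
            (a$k$l powr (1+\<alpha>)/(1+\<alpha>) + b$k$l powr (1+\<alpha>)/(1+\<alpha>))/2"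
  proof -
    fix k l
    show "?thesis k l"
    proof (cases "a$k$l = b$k$l")
      case True
      have h: "\<And>x::real. (x + x)/2 = x" by simp
      show ?thesis unfolding True h by simp
    next
      case False thus ?thesis using strict_mid assms unfolding nonneg_def by (metis order_le_less)
    qed
  qed
  have lt: "((a$k0$l0 + b$k0$l0)/2) powr (1+\<alpha>)/(1+\<alpha>) <
            (a$k0$l0 powr (1+\<alpha>)/(1+\<alpha>) + b$k0$l0 powr (1+\<alpha>)/(1+\<alpha>))/2"
    using strict_mid assms kl unfolding nonneg_def by metis
  have "L_alpha \<alpha> (midm a b) = (\<Sum>k\<in>UNIV. \<Sum>l\<in>UNIV. ((a$k$l + b$k$l)/2) powr (1+\<alpha>)/(1+\<alpha>))"
    unfolding L_alpha_def midm_def by simp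
  also have "\<dots> < (\<Sum>k\<in>UNIV. \<Sum>l\<in>UNIV. (a$k$l powr (1+\<alpha>)/(1+\<alpha>) + b$k$l powr (1+\<alpha>)/(1+\<alpha>))/2)"
  proof (rule sum_strict_mono_ex1)
    show "\<forall>k\<in>UNIV. (\<Sum>l\<in>UNIV. ((a$k$l + b$k$l)/2) powr (1+\<alpha>)/(1+\<alpha>))
        \<le> (\<Sum>l\<in>UNIV. (a$k$l powr (1+\<alpha>)/(1+\<alpha>) + b$k$l powr (1+\<alpha>)/(1+\<alpha>))/2)"
      using le by (auto intro: sum_mono)
    show "\<exists>k\<in>UNIV. (\<Sum>l\<in>UNIV. ((a$k$l + b$k$l)/2) powr (1+\<alpha>)/(1+\<alpha>))
        < (\<Sum>l\<in>UNIV. (a$k$l powr (1+\<alpha>)/(1+\<alpha>) + b$k$l powr (1+\<alpha>)/(1+\<alpha>))/2)"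
      by (rule bexI[of _ k0], rule sum_strict_mono_ex1) (use le lt in auto)
  qed simp
  also have "\<dots> = (L_alpha \<alpha> a + L_alpha \<alpha> b)/2"
    unfolding L_alpha_def by (simp add: sum.distrib sum_divide_distrib[symmetric])
  finally show ?thesis .
qed


lemma q_Feas: "nonneg q \<Longrightarrow> q \<in> Feas lam q"
  unfolding Feas_def by auto

lemma cont_L:
  assumes "\<alpha> > 0" "\<forall>r\<in>S. nonneg r"
  shows "continuous_on S (L_alpha \<alpha> :: ('n::finite) mat \<Rightarrow> real)"
proof -
  have "continuous_on S (\<lambda>r::'n mat. \<Sum>k\<in>UNIV. \<Sum>l\<in>UNIV. r $ k $ l powr (1+\<alpha>)/(1+\<alpha>))"
    using assms unfolding nonneg_def
    by (intro continuous_intros continuous_on_powr') auto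
  thus ?thesis unfolding L_alpha_def[abs_def] .
qed

lemma ex1_min:
  fixes q lam :: "('n::finite) mat"
  assumes "\<alpha> > 0" "nonneg q"
  shows "\<exists>!r. r \<in> Feas lam q \<and> (\<forall>r'\<in>Feas lam q. L_alpha \<alpha> r \<le> L_alpha \<alpha> r')"
proof (rule ex_ex1I)
  define B where "B = max 1 ((1+\<alpha>) * L_alpha \<alpha> q)"
  define K where "K = Feas lam q \<inter> {r. \<forall>k l. r $ k $ l \<le> B}"
  have FK: "\<And>r. r \<in> Feas lam q \<Longrightarrow> r \<notin> K \<Longrightarrow> L_alpha \<alpha> q < L_alpha \<alpha> r"
  proof -
    fix r assume r: "r \<in> Feas lam q" "r \<notin> K"
    show "L_alpha \<alpha> q < L_alpha \<alpha> r"
    proof (rule ccontr)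
      assume "\<not> ?thesis"
      hence "\<forall>k l. r $ k $ l \<le> B" using L_bound[OF assms(1)] r unfolding Feas_def B_def
        by (metis (mono_tags, lifting) mem_Collect_eq not_less)
      thus False using r unfolding K_def by auto
    qed
  qed
  have qK: "q \<in> K" unfolding K_def B_def using q_Feas[OF assms(2)] L_bound[OF assms] by auto
  have closedK: "closed K" unfolding K_def
    by (intro closed_Int closed_Feas closed_Collect_all closed_Collect_le continuous_intros)
  have "bounded K"
  proof -
    have "\<forall>r\<in>K. norm r \<le> (\<Sum>k\<in>(UNIV::'n set). \<Sum>l\<in>(UNIV::'n set). B)"
    proof
      fix r assume r: "r \<in> K"
      have nn: "\<And>k l. 0 \<le> r $ k $ l" "\<And>k l. r $ k $ l \<le> B"
        using r unfolding K_def Feas_def nonneg_def by auto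
      have "norm r \<le> (\<Sum>k\<in>UNIV. norm (r $ k))"
        unfolding norm_vec_def by (rule L2_set_le_sum) auto
      also have "\<dots> \<le> (\<Sum>k\<in>UNIV. \<Sum>l\<in>UNIV. \<bar>r $ k $ l\<bar>)"
        by (intro sum_mono norm_le_l1_cart)
      also have "\<dots> \<le> (\<Sum>k\<in>(UNIV::'n set). \<Sum>l\<in>(UNIV::'n set). B)"
        using nn by (intro sum_mono) auto
      finally show "norm r \<le> (\<Sum>k\<in>(UNIV::'n set). \<Sum>l\<in>(UNIV::'n set). B)" .
    qed
    thus ?thesis unfolding bounded_iff by blast
  qed
  hence compK: "compact K" using closedK by (simp add: compact_eq_bounded_closed)
  have "continuous_on K (L_alpha \<alpha>)"
    by (rule cont_L[OF assms(1)]) (auto simp: K_def Feas_def)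
  then obtain r0 where r0: "r0 \<in> K" "\<forall>y\<in>K. L_alpha \<alpha> r0 \<le> L_alpha \<alpha> y"
    using continuous_attains_inf[OF compK] qK by blast
  show "\<exists>r. r \<in> Feas lam q \<and> (\<forall>r'\<in>Feas lam q. L_alpha \<alpha> r \<le> L_alpha \<alpha> r')"
  proof (intro exI conjI ballI)
    show "r0 \<in> Feas lam q" using r0 unfolding K_def by auto
    fix r' assume r': "r' \<in> Feas lam q"
    show "L_alpha \<alpha> r0 \<le> L_alpha \<alpha> r'"
    proof (cases "r' \<in> K")
      case True thus ?thesis using r0 by auto
    next
      case False thus ?thesis using FK[OF r'] r0(2) qK by fastforce
    qed
  qed
next
  fix a b
  assume a: "a \<in> Feas lam q \<and> (\<forall>r'\<in>Feas lam q. L_alpha \<alpha> a \<le> L_alpha \<alpha> r')"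
     and b: "b \<in> Feas lam q \<and> (\<forall>r'\<in>Feas lam q. L_alpha \<alpha> b \<le> L_alpha \<alpha> r')"
  show "a = b"
  proof (rule ccontr)
    assume ne: "a \<noteq> b"
    have m: "midm a b \<in> Feas lam q" using a b Feas_midm by blast
    have "L_alpha \<alpha> (midm a b) < (L_alpha \<alpha> a + L_alpha \<alpha> b)/2"
      using L_midm[OF assms(1) _ _ ne] a b unfolding Feas_def by auto
    moreover have "L_alpha \<alpha> a \<le> L_alpha \<alpha> (midm a b)" using a m by auto
    moreover have "L_alpha \<alpha> a = L_alpha \<alpha> b" using a b by force
    ultimately show False by auto
  qed
qed


lemma finite_Sched: "finite (Sched :: ('n::finite) mat set)"
proof -
  have "Sched = perm_mat ` {p::'n\<Rightarrow>'n. bij p}" unfolding Sched_def by auto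
  moreover have "finite {p::'n\<Rightarrow>'n. bij p}" by (rule finite)
  ultimately show ?thesis by (metis finite_imageI)
qed

lemma Sched_ne: "(Sched :: ('n::finite) mat set) \<noteq> {}"
  unfolding Sched_def by auto

lemma Sched_entry: "\<pi> \<in> Sched \<Longrightarrow> \<pi> $ k $ l = 0 \<or> \<pi> $ k $ l = 1"
  unfolding Sched_def perm_mat_def by auto

lemma dotm_comm: "dotm x y = dotm y x"
  unfolding dotm_def by (simp add: mult.commute)



theorem lemmaA3:
  fixes lam q :: "('n::finite) mat" and \<alpha> :: real and i j :: 'n
  assumes "\<alpha> > 0"
    and "lam \<in> CapReg"
    and "q \<in> Inv \<alpha> lam"
    and "lam $ i $ j > 0"
  shows "\<exists>\<pi>\<in>Sched. dotm \<pi> (cpow q \<alpha>) = Max ((\<lambda>\<sigma>. dotm \<sigma> (cpow q \<alpha>)) ` Sched)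
                    \<and> \<pi> $ i $ j = 1"
proof -
  define w where "w = cpow q \<alpha>"
  have qn: "nonneg q" and Dq: "Delta \<alpha> lam q = q" using assms(3) unfolding Inv_def by auto
  have qmin: "\<forall>r'\<in>Feas lam q. L_alpha \<alpha> q \<le> L_alpha \<alpha> r'"
    using theI'[OF ex1_min[OF assms(1) qn, of lam]] Dq unfolding Delta_def by simp
  have wnn: "\<And>k l. 0 \<le> w $ k $ l" unfolding w_def cpow_def by simp
  define W where "W = Max ((\<lambda>\<sigma>. dotm \<sigma> w) ` Sched)"
  have Wge: "\<And>\<pi>. \<pi> \<in> Sched \<Longrightarrow> dotm \<pi> w \<le> W"
    unfolding W_def using finite_Sched by (intro Max_ge) auto
  obtain \<pi>s where \<pi>s: "\<pi>s \<in> Sched" "dotm \<pi>s w = W"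
  proof -
    have "W \<in> (\<lambda>\<sigma>. dotm \<sigma> w) ` Sched"
      unfolding W_def using finite_Sched Sched_ne by (intro Max_in) auto
    thus ?thesis using that by auto
  qed
  obtain \<sigma> where \<sigma>: "\<sigma> \<in> convex hull Sched" "cle lam \<sigma>" and lamnn: "nonneg lam"
    using assms(2) unfolding CapReg_def by auto
  obtain u where u: "\<forall>\<pi>\<in>Sched. 0 \<le> u \<pi>" "sum u Sched = 1" "(\<Sum>\<pi>\<in>Sched. u \<pi> *\<^sub>R \<pi>) = \<sigma>"
    using \<sigma>(1) unfolding convex_hull_finite[OF finite_Sched] by auto
  have \<sigma>e: "\<And>k l. \<sigma> $ k $ l = (\<Sum>\<pi>\<in>Sched. u \<pi> * \<pi> $ k $ l)"
    using u(3) by (auto simp: sum_component)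
  have d\<sigma>: "dotm \<sigma> w = (\<Sum>\<pi>\<in>Sched. u \<pi> * dotm \<pi> w)"
  proof -
    have "dotm \<sigma> w = (\<Sum>k\<in>UNIV. \<Sum>l\<in>UNIV. \<Sum>\<pi>\<in>Sched. u \<pi> * (\<pi>$k$l * w$k$l))"
      unfolding dotm_def \<sigma>e by (simp add: sum_distrib_right mult.assoc)
    also have "\<dots> = (\<Sum>k\<in>UNIV. \<Sum>\<pi>\<in>Sched. \<Sum>l\<in>UNIV. u \<pi> * (\<pi>$k$l * w$k$l))"
      by (rule sum.cong[OF refl], rule sum.swap)
    also have "\<dots> = (\<Sum>\<pi>\<in>Sched. \<Sum>k\<in>UNIV. \<Sum>l\<in>UNIV. u \<pi> * (\<pi>$k$l * w$k$l))"
      by (rule sum.swap)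
    also have "\<dots> = (\<Sum>\<pi>\<in>Sched. u \<pi> * dotm \<pi> w)"
      unfolding dotm_def by (simp add: sum_distrib_left)
    finally show ?thesis .
  qed
  have "\<exists>\<pi>\<in>Sched. dotm \<pi> w = W \<and> \<pi> $ i $ j = 1"
  proof (cases "dotm lam w < W")
    case False
    have "dotm lam w \<le> dotm \<sigma> w"
      unfolding dotm_def using \<sigma>(2) wnn unfolding cle_def
      by (intro sum_mono mult_right_mono) auto
    have "(\<Sum>\<pi>\<in>Sched. u \<pi> * (W - dotm \<pi> w)) = W - dotm \<sigma> w"
    proof -
      have "(\<Sum>\<pi>\<in>Sched. u \<pi> * (W - dotm \<pi> w)) = (\<Sum>\<pi>\<in>Sched. u \<pi> * W) - (\<Sum>\<pi>\<in>Sched. u \<pi> * dotm \<pi> w)"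
        by (simp add: right_diff_distrib sum_subtractf)
      moreover have "(\<Sum>\<pi>\<in>Sched. u \<pi> * W) = W"
        using u(2) sum_distrib_right[of u Sched W] by simp
      ultimately show ?thesis unfolding d\<sigma> by simp
    qed
    also have "\<dots> \<le> 0" using False \<open>dotm lam w \<le> dotm \<sigma> w\<close> by linarith
    finally have s0: "(\<Sum>\<pi>\<in>Sched. u \<pi> * (W - dotm \<pi> w)) \<le> 0" .
    have nnt: "\<forall>\<pi>\<in>Sched. 0 \<le> u \<pi> * (W - dotm \<pi> w)"
      using u(1) Wge by (simp add: mult_nonneg_nonneg)
    have "0 \<le> (\<Sum>\<pi>\<in>Sched. u \<pi> * (W - dotm \<pi> w))" using nnt by (intro sum_nonneg) auto
    hence "(\<Sum>\<pi>\<in>Sched. u \<pi> * (W - dotm \<pi> w)) = 0" using s0 by linarith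
    hence z: "\<forall>\<pi>\<in>Sched. u \<pi> * (W - dotm \<pi> w) = 0"
      using sum_nonneg_eq_0_iff[OF finite_Sched, of "\<lambda>\<pi>. u \<pi> * (W - dotm \<pi> w)"] nnt by auto
    have "lam $ i $ j \<le> \<sigma> $ i $ j" using \<sigma>(2) unfolding cle_def by auto
    hence "\<sigma> $ i $ j > 0" using assms(4) by linarith
    have "\<exists>\<pi>\<in>Sched. u \<pi> * \<pi> $ i $ j \<noteq> 0"
    proof (rule ccontr)
      assume "\<not> ?thesis"
      hence "(\<Sum>\<pi>\<in>Sched. u \<pi> * \<pi> $ i $ j) = 0" by (intro sum.neutral) auto
      thus False using \<open>\<sigma> $ i $ j > 0\<close> unfolding \<sigma>e by simp
    qed
    then obtain \<pi> where \<pi>: "\<pi> \<in> Sched" "u \<pi> \<noteq> 0" "\<pi> $ i $ j \<noteq> 0" by auto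
    hence "\<pi> $ i $ j = 1" using Sched_entry[of \<pi> i j] by auto
    moreover have "dotm \<pi> w = W" using z \<pi> by auto
    ultimately show ?thesis using \<pi>(1) by blast
  next
    case True
    define d where "d = lam - \<pi>s"
    have de: "\<And>k l. d$k$l = lam$k$l - \<pi>s$k$l" unfolding d_def by simp
    define r where "r = (\<lambda>\<epsilon>::real. (\<chi> k l. max (q$k$l + \<epsilon> * d$k$l) 0) :: 'n mat)"
    have re: "\<And>\<epsilon> k l. r \<epsilon> $k$l = max (q$k$l + \<epsilon> * d$k$l) 0" unfolding r_def by simp
    define \<Phi> where "\<Phi> = (\<lambda>\<epsilon>. \<Sum>k\<in>UNIV. \<Sum>l\<in>UNIV. d$k$l * (max (q$k$l + \<epsilon> * d$k$l) 0) powr \<alpha>)"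
    have qnn: "\<And>k l. 0 \<le> q$k$l" using qn unfolding nonneg_def by auto
    have \<pi>snn: "\<And>k l. 0 \<le> \<pi>s$k$l" using Sched_entry[OF \<pi>s(1)] by (metis order_refl zero_le_one)
    have \<Phi>0: "\<Phi> 0 = dotm lam w - W"
    proof -
      have "\<Phi> 0 = (\<Sum>k\<in>UNIV. \<Sum>l\<in>UNIV. lam$k$l * w$k$l - \<pi>s$k$l * w$k$l)"
        unfolding \<Phi>_def w_def cpow_def de using qnn by (simp add: left_diff_distrib)
      also have "\<dots> = dotm lam w - dotm \<pi>s w" unfolding dotm_def by (simp add: sum_subtractf)
      finally show ?thesis using \<pi>s(2) by simp
    qed
    have limkl: "\<And>k l. ((\<lambda>\<epsilon>. (max (q$k$l + \<epsilon> * d$k$l) 0) powr \<alpha>) \<longlongrightarrow>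
                   (max (q$k$l + 0 * d$k$l) 0) powr \<alpha>) (at_right 0)"
    proof -
      fix k l
      have a: "((\<lambda>\<epsilon>. q$k$l + \<epsilon> * d$k$l) \<longlongrightarrow> q$k$l + 0 * d$k$l) (at_right 0)"
        by (intro tendsto_intros)
      have b: "((\<lambda>\<epsilon>. max (q$k$l + \<epsilon> * d$k$l) 0) \<longlongrightarrow> max (q$k$l + 0 * d$k$l) 0) (at_right 0)"
        by (intro tendsto_max a tendsto_const)
      show "?thesis k l"
        by (rule tendsto_powr'[OF b tendsto_const]) (auto simp: assms(1))
    qed
    have lim: "(\<Phi> \<longlongrightarrow> \<Phi> 0) (at_right 0)"
      unfolding \<Phi>_def by (intro tendsto_sum tendsto_mult_left limkl)
    have "eventually (\<lambda>\<epsilon>. \<Phi> \<epsilon> < 0) (at_right 0)"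
      using order_tendstoD(2)[OF lim, of 0] \<Phi>0 True by auto
    hence "eventually (\<lambda>\<epsilon>. 0 < \<epsilon> \<and> \<Phi> \<epsilon> < 0) (at_right (0::real))"
      using eventually_at_right_less[of "0::real"] by (simp add: eventually_conj_iff)
    then obtain \<epsilon> where \<epsilon>: "0 < \<epsilon>" "\<Phi> \<epsilon> < 0"
      using eventually_happens'[of "at_right (0::real)"] trivial_limit_at_right_real by auto
    have rF: "r \<epsilon> \<in> Feas lam q"
      unfolding Feas_def
    proof (intro CollectI conjI allI ballI impI)
      show "nonneg (r \<epsilon>)" unfolding nonneg_def re by simp
    next
      fix k l assume "lam $ k $ l = 0"
      thus "r \<epsilon> $ k $ l \<le> q $ k $ l" unfolding re de
        using qnn[of k l] \<pi>snn[of k l] \<epsilon>(1) by (simp add: mult_nonneg_nonneg)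
    next
      fix \<xi> assume \<xi>: "\<xi> \<in> Xi lam"
      have \<xi>D: "\<xi> \<in> DualPoly" using \<xi> unfolding Xi_def SStar_def ExtE_def extreme_point_of_def by auto
      have \<xi>n: "\<And>k l. 0 \<le> \<xi>$k$l" using \<xi>D unfolding DualPoly_def nonneg_def by auto
      have "dotm \<xi> \<pi>s \<le> Max ((\<lambda>\<pi>. dotm \<xi> \<pi>) ` Sched)"
        using finite_Sched \<pi>s(1) by (intro Max_ge) auto
      also have "\<dots> \<le> 1" using \<xi>D unfolding DualPoly_def by auto
      finally have x1: "dotm \<xi> \<pi>s \<le> 1" .
      have x2: "dotm \<xi> lam = 1" using \<xi> unfolding Xi_def by auto
      have "dotm \<xi> q + \<epsilon> * (dotm \<xi> lam - dotm \<xi> \<pi>s) =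
            (\<Sum>k\<in>UNIV. \<Sum>l\<in>UNIV. \<xi>$k$l * (q$k$l + \<epsilon> * d$k$l))"
        unfolding dotm_def de
        by (simp add: algebra_simps sum.distrib sum_subtractf sum_distrib_left)
      also have "\<dots> \<le> dotm \<xi> (r \<epsilon>)"
        unfolding dotm_def re using \<xi>n by (intro sum_mono mult_left_mono) auto
      finally show "dotm \<xi> q \<le> dotm \<xi> (r \<epsilon>)"
        using x1 x2 \<epsilon>(1) by (smt (verit) mult_nonneg_nonneg)
    qed
    have entry: "\<And>k l. (r \<epsilon>$k$l) powr (1+\<alpha>)/(1+\<alpha>) - q$k$l powr (1+\<alpha>)/(1+\<alpha>)
                   \<le> \<epsilon> * (d$k$l * (max (q$k$l + \<epsilon> * d$k$l) 0) powr \<alpha>)"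
    proof -
      fix k l
      have t: "(r \<epsilon>$k$l) powr \<alpha> * (q$k$l - r \<epsilon>$k$l) \<le>
               q$k$l powr (1+\<alpha>)/(1+\<alpha>) - (r \<epsilon>$k$l) powr (1+\<alpha>)/(1+\<alpha>)"
        using tangent_ineq[OF assms(1) qnn[of k l], of "r \<epsilon>$k$l"] re by simp
      have "(r \<epsilon>$k$l) powr \<alpha> * (r \<epsilon>$k$l - q$k$l) = \<epsilon> * (d$k$l * (max (q$k$l + \<epsilon> * d$k$l) 0) powr \<alpha>)"
      proof (cases "q$k$l + \<epsilon> * d$k$l \<ge> 0")
        case True thus ?thesis unfolding re by (simp add: algebra_simps)
      next
        case False thus ?thesis unfolding re by simp
      qed
      moreover have "(r \<epsilon>$k$l) powr \<alpha> * (q$k$l - r \<epsilon>$k$l) = - ((r \<epsilon>$k$l) powr \<alpha> * (r \<epsilon>$k$l - q$k$l))"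
        by (simp add: algebra_simps)
      ultimately show "?thesis k l" using t by linarith
    qed
    have "L_alpha \<alpha> (r \<epsilon>) - L_alpha \<alpha> q =
          (\<Sum>k\<in>UNIV. \<Sum>l\<in>UNIV. (r \<epsilon>$k$l) powr (1+\<alpha>)/(1+\<alpha>) - q$k$l powr (1+\<alpha>)/(1+\<alpha>))"
      unfolding L_alpha_def by (simp add: sum_subtractf)
    also have "\<dots> \<le> (\<Sum>k\<in>UNIV. \<Sum>l\<in>UNIV. \<epsilon> * (d$k$l * (max (q$k$l + \<epsilon> * d$k$l) 0) powr \<alpha>))"
      by (intro sum_mono entry)
    also have "\<dots> = \<epsilon> * \<Phi> \<epsilon>" unfolding \<Phi>_def by (simp add: sum_distrib_left)
    also have "\<dots> < 0" using \<epsilon> by (simp add: mult_pos_neg)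
    finally have "L_alpha \<alpha> (r \<epsilon>) < L_alpha \<alpha> q" by simp
    moreover have "L_alpha \<alpha> q \<le> L_alpha \<alpha> (r \<epsilon>)" using qmin rF by auto
    ultimately show ?thesis by linarith
  qed
  thus ?thesis unfolding W_def w_def .
qed

end
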